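(* Let $a,b\in \mathcal{A}^{\mathrm{gcEP}}$. Then the following are equivalent: (1) $a\leq^{\mathrm{gcEP}}b$. (2) There exist $e_1=aa^{\mathrm{gcEP}}$ and $e_2=e_2^*=e_2^2$ such that $a=\begin{pmatrix} t_1&s_1&s_2\\ 0&n_1&n_2\\ 0&n_3&n_4\end{pmatrix}_{e\times e}$, $b=\begin{pmatrix} t_1&s_1&s_2\\ 0&t_3&t_4\\ 0&0&t_5\end{pmatrix}_{e\times e}$, where $e=\{ e_1,e_2,1-e_1-e_2\}$, $t_1\in (e_1\mathcal{A}e_1)^{-1}$, $t_3\in (e_2\mathcal{A}e_2)^{-1}$ and $n_1+n_2+n_3+n_4,\ t_5\in \mathcal{A}^{qnil}$.
   Context: $\mathcal{A}$ is a complex Banach *-algebra with identity; $\mathcal{A}^{qnil}$ is the set of quasinilpotent elements. An element $a$ has a generalized core-EP inverse if there is $x$ with $x=ax^2$, $(ax)^*=ax$, $\lim_{n\to\infty}\|a^n-xa^{n+1}\|^{1/n}=0$; this $x$ is unique, denoted $a^{\mathrm{gcEP}}$, and $\mathcal{A}^{\mathrm{gcEP}}$ is the set of such $a$. For $a,b\in\mathcal{A}^{\mathrm{gcEP}}$, $a\leq^{\mathrm{gcEP}}b$ means $aa^{\mathrm{gcEP}}=ba^{\mathrm{gcEP}}$ and $a^{\mathrm{gcEP}}a=a^{\mathrm{gcEP}}b$. For a set $e=\{e_1,\dots,e_n\}$ of idempotents with $1=e_1+\cdots+e_n$ and $e_ie_j=0$ ($i\neq j$), an element $x$ is written in matrix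 form $x=(e_ixe_j)_{e\times e}$. *)

theory Defs
  imports "HOL-Analysis.Analysis"
begin

class complex_banach_star_algebra = real_normed_algebra_1 + banach +
  fixes scaleC :: "complex \<Rightarrow> 'a \<Rightarrow> 'a"
    and adj :: "'a \<Rightarrow> 'a"
  assumes scaleC_of_real: "scaleC (of_real r) x = scaleR r x"
    and scaleC_add_left: "scaleC (c + d) x = scaleC c x + scaleC d x"
    and scaleC_add_right: "scaleC c (x + y) = scaleC c x + scaleC c y"
    and scaleC_scaleC: "scaleC c (scaleC d x) = scaleC (c * d) x"
    and scaleC_one: "scaleC 1 x = x"
    and norm_scaleC: "norm (scaleC c x) = norm c * norm x"
    and mult_scaleC_left: "scaleC c x * y = scaleC c (x * y)"
    and mult_scaleC_right: "x * scaleC c y = scaleC c (x * y)"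
    and adj_adj: "adj (adj x) = x"
    and adj_add: "adj (x + y) = adj x + adj y"
    and adj_mult: "adj (x * y) = adj y * adj x"
    and adj_scaleC: "adj (scaleC c x) = scaleC (cnj c) (adj x)"

context complex_banach_star_algebra
begin

text \<open>Quasinilpotent elements: spectral radius zero, i.e. lim ||a^n||^(1/n) = 0.\<close>
definition qnil :: "'a set" where
  "qnil = {a. (\<lambda>n. root n (norm (a ^ n))) \<longlonglongrightarrow> 0}"

definition is_gcEP :: "'a \<Rightarrow> 'a \<Rightarrow> bool" where
  "is_gcEP a x \<longleftrightarrow> x = a * x ^ 2 \<and> adj (a * x) = a * x \<and>
     (\<lambda>n. root n (norm (a ^ n - x * a ^ (n + 1)))) \<longlonglongrightarrow> 0"

definition gcEP_set :: "'a set" where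
  "gcEP_set = {a. \<exists>x. is_gcEP a x}"

definition gcEP :: "'a \<Rightarrow> 'a" where
  "gcEP a = (THE x. is_gcEP a x)"

definition gcEP_le :: "'a \<Rightarrow> 'a \<Rightarrow> bool" where
  "gcEP_le a b \<longleftrightarrow> a * gcEP a = b * gcEP a \<and> gcEP a * a = gcEP a * b"

definition corner_inv :: "'a \<Rightarrow> 'a \<Rightarrow> bool" where
  "corner_inv p t \<longleftrightarrow> t \<in> {p * z * p | z. True} \<and>
     (\<exists>y \<in> {p * z * p | z. True}. t * y = p \<and> y * t = p)"

end

end

theory Submission
  imports Defs
begin


lemma rootlim_zero:
  fixes f g :: "nat \<Rightarrow> real" and z :: "'b::real_normed_vector"
  assumes f: "(\<lambda>n. root n (f n)) \<longlonglongrightarrow> 0" and g: "(\<lambda>n. root n (g n)) \<longlonglongrightarrow> 0"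
    and f0: "\<And>n. f n \<ge> 0" and g0: "\<And>n. g n \<ge> 0" and C: "C \<ge> 0" and M: "M \<ge> 0"
    and bd: "\<And>n. norm z \<le> C * (f n + g n) * M ^ n"
  shows "z = 0"
proof -
  define e where "e = 1 / (2 * (M + 1))"
  have e0: "e > 0" using M by (simp add: e_def)
  have eM: "e * M \<le> 1/2" using M by (simp add: e_def field_simps)
  have ef: "eventually (\<lambda>n. root n (f n) < e) sequentially"
    using order_tendstoD(2)[OF f e0] .
  have eg: "eventually (\<lambda>n. root n (g n) < e) sequentially"
    using order_tendstoD(2)[OF g e0] .
  have ev: "eventually (\<lambda>n. norm z \<le> 2 * C * (1/2) ^ n) sequentially"
    using ef eg eventually_gt_at_top[of 0]
  proof eventually_elim
    case (elim n)
    have "f n = root n (f n) ^ n" using elim f0 by (simp add: real_root_pow_pos2)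
    also have "\<dots> \<le> e ^ n" using elim by (intro power_mono) (auto simp: f0)
    finally have 1: "f n \<le> e ^ n" .
    have "g n = root n (g n) ^ n" using elim g0 by (simp add: real_root_pow_pos2)
    also have "\<dots> \<le> e ^ n" using elim by (intro power_mono) (auto simp: g0)
    finally have 2: "g n \<le> e ^ n" .
    have "(e * M) ^ n \<le> (1/2) ^ n" using eM e0 M by (intro power_mono) auto
    hence 3: "e ^ n * M ^ n \<le> (1/2)^n" by (simp add: power_mult_distrib)
    have "norm z \<le> C * (f n + g n) * M ^ n" by (rule bd)
    also have "\<dots> \<le> C * (2 * e ^ n) * M ^ n"
      using 1 2 C M by (intro mult_right_mono mult_left_mono) auto
    also have "\<dots> = 2 * C * (e ^ n * M ^ n)" by simp
    also have "\<dots> \<le> 2 * C * (1/2)^n" using 3 C by (intro mult_left_mono) auto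
    finally show ?case .
  qed
  have lim: "(\<lambda>n. 2 * C * (1/2::real) ^ n) \<longlonglongrightarrow> 0"
    by (intro tendsto_mult_right_zero LIMSEQ_power_zero) auto
  have "norm z \<le> 0"
    using tendsto_le[OF _ lim tendsto_const ev] by simp
  thus ?thesis by simp
qed

lemma rootlim_zero1:
  fixes f :: "nat \<Rightarrow> real" and z :: "'b::real_normed_vector"
  assumes f: "(\<lambda>n. root n (f n)) \<longlonglongrightarrow> 0"
    and f0: "\<And>n. f n \<ge> 0" and C: "C \<ge> 0" and M: "M \<ge> 0"
    and bd: "\<And>n. norm z \<le> C * f n * M ^ n"
  shows "z = 0"
  by (rule rootlim_zero[OF f _ f0 _ C M, of "\<lambda>_. 0"]) (auto simp: bd)




lemma adj_diff: "adj (x - y) = adj x - adj (y::'a::complex_banach_star_algebra)"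
  by (metis adj_add diff_add_cancel eq_diff_eq)

lemma gc_pow: fixes a x :: "'a::complex_banach_star_algebra" assumes "is_gcEP a x" shows "x = a ^ k * x ^ (k + 1)"
proof (induction k)
  case 0 then show ?case by simp
next
  case (Suc k)
  have xx: "a * (x * x) = x" using assms by (simp add: is_gcEP_def power2_eq_square)
  have "x ^ (Suc k + 1) = x * x * x ^ k" by (simp add: mult.assoc)
  hence "a ^ Suc k * x ^ (Suc k + 1) = a ^ k * (a * (x * x)) * x ^ k"
    by (simp del: power_Suc add: power_Suc2 mult.assoc)
  also have "\<dots> = a ^ k * x ^ (k+1)" using xx by (simp add: mult.assoc)
  finally show ?case using Suc by simp
qed

lemma gc_lim: fixes a x :: "'a::complex_banach_star_algebra" assumes "is_gcEP a x"
  shows "(\<lambda>n. root n (norm (a ^ n - x * a ^ (n + 1)))) \<longlonglongrightarrow> 0"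
  using assms by (simp add: is_gcEP_def)

lemma absorb:
  fixes b y :: "'a::complex_banach_star_algebra" assumes g: "is_gcEP b y" and r: "\<And>k. r = b ^ (k + 1) * z * w ^ k"
  shows "(1 - b * y) * r = 0"
proof (rule rootlim_zero1[where f="\<lambda>n. norm (b ^ n - y * b ^ (n + 1))" and C="norm b * norm z" and M="norm w"])
  show "(\<lambda>n. root n (norm (b ^ n - y * b ^ (n + 1)))) \<longlonglongrightarrow> 0" using gc_lim[OF g] .
  fix k
  have "(1 - b * y) * r = b * (b ^ k - y * b ^ (k + 1)) * z * w ^ k"
    by (subst r[of k]) (simp add: algebra_simps power_Suc)
  also have "norm \<dots> \<le> norm b * norm (b ^ k - y * b ^ (k + 1)) * norm z * norm w ^ k"
    by (smt (verit, best) mult_left_mono mult_mono norm_ge_zero norm_mult_ineq norm_power_ineq zero_le_mult_iff)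
  finally show "norm ((1 - b * y) * r) \<le> norm b * norm z * norm (b ^ k - y * b ^ (k + 1)) * norm w ^ k"
    by (simp add: algebra_simps)
qed auto



lemma gc_xx: fixes a x :: "'a::complex_banach_star_algebra"
  assumes "is_gcEP a x" shows "a * (x * x) = x"
  using assms by (simp add: is_gcEP_def power2_eq_square)

lemma gc_adj: fixes a x :: "'a::complex_banach_star_algebra"
  assumes "is_gcEP a x" shows "adj (a * x) = a * x"
  using assms by (simp add: is_gcEP_def)

lemma gc_xax: fixes a x :: "'a::complex_banach_star_algebra"
  assumes g: "is_gcEP a x" shows "x * a * x = x"
proof -
  have "x - x * a * x = 0"
  proof (rule rootlim_zero1[where f="\<lambda>n. norm (a ^ n - x * a ^ (n + 1))" and C="norm x" and M="norm x"])
    show "(\<lambda>n. root n (norm (a ^ n - x * a ^ (n + 1)))) \<longlonglongrightarrow> 0" using gc_lim[OF g] .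
    fix k
    have e1: "a ^ k * x ^ (k + 1) = x" using gc_pow[OF g, of k] by simp
    have "x * a ^ (k + 1) * x ^ (k + 1) = x * a * (a ^ k * x ^ (k + 1))"
      by (simp add: mult.assoc)
    hence e2: "x * a ^ (k + 1) * x ^ (k + 1) = x * a * x" using e1 by simp
    have "x - x * a * x = (a ^ k - x * a ^ (k + 1)) * x * x ^ k"
      using e1 e2 by (simp add: algebra_simps)
    also have "norm \<dots> \<le> norm (a ^ k - x * a ^ (k + 1)) * norm x * norm x ^ k"
      by (smt (verit, best) mult_left_mono mult_mono norm_ge_zero norm_mult_ineq norm_power_ineq zero_le_mult_iff)
    finally show "norm (x - x * a * x) \<le> norm x * norm (a ^ k - x * a ^ (k + 1)) * norm x ^ k"
      by (simp add: algebra_simps)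
  qed auto
  thus ?thesis by simp
qed

lemma pow_comm_in: fixes a z :: "'a::monoid_mult" shows "a * (a ^ k * z) = a ^ k * (a * z)"
  by (simp add: mult.assoc[symmetric] power_commutes)

lemma gc_ap: fixes a x :: "'a::complex_banach_star_algebra"
  assumes g: "is_gcEP a x" shows "(1 - a * x) * (a * (a * x)) = 0"
proof (rule absorb[OF g, where z="a * x" and w=x])
  fix k
  have e: "a ^ (k + 1) * x ^ (k + 1) = a * x"
    using gc_pow[OF g, of k] by (simp add: mult.assoc)
  have "a ^ (k + 1) * (a * x) * x ^ k = a * (a ^ (k + 1) * x ^ (k + 1))"
    by (simp add: mult.assoc pow_comm_in)
  thus "a * (a * x) = a ^ (k + 1) * (a * x) * x ^ k" using e by simp
qed

lemma gc_apx: fixes a x :: "'a::complex_banach_star_algebra"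
  assumes g: "is_gcEP a x" shows "a ^ k * (a * x) * x ^ k = a * x"
proof (induction k)
  case 0 then show ?case by simp
next
  case (Suc k)
  have px: "a * x * x = x" using gc_xx[OF g] by (simp add: mult.assoc)
  have "a ^ Suc k * (a * x) * x ^ Suc k = a ^ k * (a * (a * x * x)) * x ^ k"
    by (simp add: mult.assoc pow_comm_in)
  also have "\<dots> = a ^ k * (a * x) * x ^ k" using px by simp
  finally show ?case using Suc by simp
qed

lemma gc_xap: fixes a x :: "'a::complex_banach_star_algebra"
  assumes g: "is_gcEP a x" shows "x * a * (a * x) = a * x"
proof -
  have "a * x - x * a * (a * x) = 0"
  proof (rule rootlim_zero1[where f="\<lambda>n. norm (a ^ n - x * a ^ (n + 1))" and C="norm (a * x)" and M="norm x"])
    show "(\<lambda>n. root n (norm (a ^ n - x * a ^ (n + 1)))) \<longlonglongrightarrow> 0" using gc_lim[OF g] .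
    fix k
    have e1: "a ^ k * (a * x) * x ^ k = a * x" using gc_apx[OF g] .
    have "x * a ^ (k + 1) * (a * x) * x ^ k = x * a * (a ^ k * (a * x) * x ^ k)"
      by (simp add: mult.assoc)
    hence e2: "x * a ^ (k + 1) * (a * x) * x ^ k = x * a * (a * x)" using e1 by simp
    have "a * x - x * a * (a * x) = (a ^ k - x * a ^ (k + 1)) * (a * x) * x ^ k"
      using e1 e2 by (simp add: algebra_simps)
    also have "norm \<dots> \<le> norm (a ^ k - x * a ^ (k + 1)) * norm (a * x) * norm x ^ k"
      by (smt (verit, best) mult_left_mono mult_mono norm_ge_zero norm_mult_ineq norm_power_ineq zero_le_mult_iff)
    finally show "norm (a * x - x * a * (a * x)) \<le> norm (a * x) * norm (a ^ k - x * a ^ (k + 1)) * norm x ^ k"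
      by (simp add: algebra_simps)
  qed auto
  thus ?thesis by simp
qed

lemma gc_unique: fixes a x y :: "'a::complex_banach_star_algebra"
  assumes g: "is_gcEP a x" and h: "is_gcEP a y" shows "x = y"
proof -
  have r1: "\<And>k. a * y = a ^ (k + 1) * y * y ^ k"
    using gc_pow[OF h] by (simp add: mult.assoc)
  have r2: "\<And>k. a * x = a ^ (k + 1) * x * x ^ k"
    using gc_pow[OF g] by (simp add: mult.assoc)
  have "(1 - a * x) * (a * y) = 0" by (rule absorb[OF g r1])
  hence q: "a * y = a * x * (a * y)" by (simp add: algebra_simps)
  have "(1 - a * y) * (a * x) = 0" by (rule absorb[OF h r2])
  hence p: "a * x = a * y * (a * x)" by (simp add: algebra_simps)
  obtain P Q where PQ: "P = a * x" "Q = a * y" by blast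
  have aP: "adj P = P" and aQ: "adj Q = Q" using gc_adj[OF g] gc_adj[OF h] PQ by auto
  have "Q = adj (P * Q)" using q aQ PQ by simp
  also have "\<dots> = Q * P" by (simp only: adj_mult aP aQ)
  also have "\<dots> = P" using p PQ by simp
  finally have "Q = P" .
  hence pq: "a * y = a * x" using PQ by simp
  have xe: "\<And>k. x = x * a ^ (k + 1) * x ^ (k + 1)"
  proof -
    fix k
    have "x * a ^ (k + 1) * x ^ (k + 1) = x * (a * (a ^ k * x ^ (k + 1)))"
      by (simp add: mult.assoc)
    also have "\<dots> = x * a * x" using gc_pow[OF g, of k] by (simp add: mult.assoc)
    finally show "x = x * a ^ (k + 1) * x ^ (k + 1)" using gc_xax[OF g] by simp
  qed
  have ye: "\<And>k. y = y * a ^ (k + 1) * x ^ (k + 1)"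
  proof -
    fix k
    have "y * a ^ (k + 1) * x ^ (k + 1) = y * (a * (a ^ k * x ^ (k + 1)))"
      by (simp add: mult.assoc)
    also have "\<dots> = y * (a * x)" using gc_pow[OF g, of k] by (simp add: mult.assoc)
    also have "\<dots> = y * a * y" using pq by (simp add: mult.assoc)
    finally show "y = y * a ^ (k + 1) * x ^ (k + 1)" using gc_xax[OF h] by simp
  qed
  have "x - y = 0"
  proof (rule rootlim_zero[OF gc_lim[OF g] gc_lim[OF h], where C="norm x" and M="norm x"])
    fix k
    have "x - y = ((a ^ k - y * a ^ (k + 1)) - (a ^ k - x * a ^ (k + 1))) * x * x ^ k"
      using xe[of k] ye[of k] by (simp add: algebra_simps)
    also have "norm \<dots> \<le> (norm (a ^ k - x * a ^ (k + 1)) + norm (a ^ k - y * a ^ (k + 1))) * norm x * norm x ^ k"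
    proof -
      have "norm (((a ^ k - y * a ^ (k + 1)) - (a ^ k - x * a ^ (k + 1))) * x * x ^ k)
          \<le> norm ((a ^ k - y * a ^ (k + 1)) - (a ^ k - x * a ^ (k + 1))) * norm x * norm x ^ k"
        by (smt (verit, best) mult_left_mono mult_mono norm_ge_zero norm_mult_ineq norm_power_ineq zero_le_mult_iff)
      also have "\<dots> \<le> (norm (a ^ k - x * a ^ (k + 1)) + norm (a ^ k - y * a ^ (k + 1))) * norm x * norm x ^ k"
        using norm_triangle_ineq4[of "a ^ k - y * a ^ (k + 1)" "a ^ k - x * a ^ (k + 1)"]
        by (intro mult_right_mono) (simp_all only: add.commute norm_ge_zero zero_le_mult_iff zero_le_power)
      finally show ?thesis .
    qed
    finally show "norm (x - y) \<le> norm x * (norm (a ^ k - x * a ^ (k + 1)) + norm (a ^ k - y * a ^ (k + 1))) * norm x ^ k"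
      by (simp add: algebra_simps)
  qed auto
  thus ?thesis by simp
qed

lemma gc_qnil: fixes a x :: "'a::complex_banach_star_algebra"
  assumes g: "is_gcEP a x" shows "(1 - a * x) * a * (1 - a * x) \<in> qnil"
proof -
  define p where "p = a * x"
  define u where "u = (1 - p) * a * (1 - p)"
  have ap: "(1 - p) * (a * p) = 0" using gc_ap[OF g] by (simp add: p_def)
  have u1: "u = (1 - p) * a" using ap unfolding u_def by (simp add: algebra_simps)
  have upow: "u ^ Suc n = (1 - p) * a ^ Suc n" for n
  proof (induction n)
    case 0 then show ?case using u1 by simp
  next
    case (Suc n)
    have "u ^ Suc (Suc n) = (1 - p) * a * ((1 - p) * a ^ Suc n)"
      using Suc u1 by (simp only: power_Suc[of u "Suc n"]) simp
    also have "\<dots> = (1 - p) * a * a ^ Suc n - (1 - p) * (a * p) * a ^ Suc n"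
      by (simp add: algebra_simps)
    also have "\<dots> = (1 - p) * a ^ Suc (Suc n)" using ap by (simp add: mult.assoc)
    finally show ?case .
  qed
  have px: "(1 - p) * x = 0" using gc_xx[OF g] by (simp add: p_def algebra_simps mult.assoc)
  define C where "C = norm (1 - p) + 1"
  have C0: "C > 0" by (simp add: C_def add_nonneg_pos)
  define f where "f n = norm (a ^ n - x * a ^ (n + 1))" for n
  have bd: "root n (norm (u ^ n)) \<le> root n C * root n (f n)" for n
  proof (cases n)
    case 0 then show ?thesis by simp
  next
    case (Suc m)
    have e: "(1 - p) * (a ^ n - x * a ^ (n + 1)) = (1 - p) * a ^ n - ((1 - p) * x) * a ^ (n + 1)"
      by (simp only: right_diff_distrib mult.assoc)
    have "u ^ n = (1 - p) * (a ^ n - x * a ^ (n + 1))"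
      unfolding e px using upow[of m] Suc by simp
    hence "norm (u ^ n) \<le> norm (1 - p) * f n" by (simp add: f_def norm_mult_ineq)
    also have "\<dots> \<le> C * f n" by (intro mult_right_mono) (auto simp: C_def f_def)
    finally have "norm (u ^ n) \<le> C * f n" .
    hence "root n (norm (u ^ n)) \<le> root n (C * f n)" using Suc by (intro real_root_le_mono) auto
    thus ?thesis by (simp add: real_root_mult)
  qed
  have lim: "(\<lambda>n. root n C * root n (f n)) \<longlonglongrightarrow> 1 * 0"
    by (intro tendsto_mult LIMSEQ_root_const C0) (use gc_lim[OF g] in \<open>simp add: f_def\<close>)
  have "(\<lambda>n. root n (norm (u ^ n))) \<longlonglongrightarrow> 0"
  proof (rule tendsto_sandwich[where f="\<lambda>_. 0" and h="\<lambda>n. root n C * root n (f n)"])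
    show "\<forall>\<^sub>F n in sequentially. 0 \<le> root n (norm (u ^ n))" by (simp add: real_root_ge_zero)
    show "\<forall>\<^sub>F n in sequentially. root n (norm (u ^ n)) \<le> root n C * root n (f n)" using bd by simp
  qed (use lim in auto)
  thus ?thesis by (simp add: qnil_def u_def p_def)
qed



lemma gcEP_is: fixes a :: "'a::complex_banach_star_algebra"
  assumes "a \<in> gcEP_set" shows "is_gcEP a (gcEP a)"
proof -
  obtain x where x: "is_gcEP a x" using assms by (auto simp: gcEP_set_def)
  have "gcEP a = x" unfolding gcEP_def
    by (rule the_equality[where P="is_gcEP a", OF x]) (use gc_unique[OF x] in auto)
  thus ?thesis using x by simp
qed

lemma gc_facts: fixes a x :: "'a::complex_banach_star_algebra"
  assumes g: "is_gcEP a x"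
  shows "a * x * (a * x) = a * x" "a * x * x = x" "x * (a * x) = x" "adj (a * x) = a * x"
    "a * (a * x) = a * x * (a * (a * x))" "x * a * (a * x) = a * x" "x * a * x = x"
proof -
  show 1: "x * a * x = x" by (rule gc_xax[OF g])
  show "a * x * (a * x) = a * x" using 1 by (simp add: mult.assoc)
  show "a * x * x = x" using gc_xx[OF g] by (simp add: mult.assoc)
  show "x * (a * x) = x" using 1 by (simp add: mult.assoc)
  show "adj (a * x) = a * x" by (rule gc_adj[OF g])
  show "a * (a * x) = a * x * (a * (a * x))" using gc_ap[OF g] by (simp add: algebra_simps)
  show "x * a * (a * x) = a * x" by (rule gc_xap[OF g])
qed

lemma dir_back: fixes a b :: "'a::complex_banach_star_algebra"
  assumes A: "a \<in> gcEP_set"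
  and H: "(\<exists>e1 e2 t1 s1 s2 n1 n2 n3 n4 t3 t4 t5.
       e1 = a * gcEP a \<and> e2 = adj e2 \<and> e2 = e2 ^ 2 \<and>
       e1 * e1 = e1 \<and> e1 * e2 = 0 \<and> e2 * e1 = 0 \<and>
       (let e3 = 1 - e1 - e2 in
         e1 * a * e1 = t1 \<and> e1 * a * e2 = s1 \<and> e1 * a * e3 = s2 \<and>
         e2 * a * e1 = 0 \<and> e2 * a * e2 = n1 \<and> e2 * a * e3 = n2 \<and>
         e3 * a * e1 = 0 \<and> e3 * a * e2 = n3 \<and> e3 * a * e3 = n4 \<and>
         e1 * b * e1 = t1 \<and> e1 * b * e2 = s1 \<and> e1 * b * e3 = s2 \<and>
         e2 * b * e1 = 0 \<and> e2 * b * e2 = t3 \<and> e2 * b * e3 = t4 \<and>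
         e3 * b * e1 = 0 \<and> e3 * b * e2 = 0 \<and> e3 * b * e3 = t5) \<and>
       corner_inv e1 t1 \<and> corner_inv e2 t3 \<and>
       n1 + n2 + n3 + n4 \<in> qnil \<and> t5 \<in> qnil)"
  shows "gcEP_le a b"
proof -
  define x where "x = gcEP a"
  have g: "is_gcEP a x" using gcEP_is[OF A] by (simp add: x_def)
  note F = gc_facts[OF g]
  from H obtain e2 where
    E: "p * a * p = p * b * p" "p * a * e2 = p * b * e2" "p * a * (1 - p - e2) = p * b * (1 - p - e2)"
       "e2 * b * p = 0" "(1 - p - e2) * b * p = 0" "e2 * a * p = 0" "(1 - p - e2) * a * p = 0"
    if "p = a * x" for p
    unfolding x_def Let_def by metis
  define p where "p = a * x"
  note E = E[OF p_def]
  have "b * p = (p + e2 + (1 - p - e2)) * b * p" by simp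
  also have "\<dots> = p * b * p + e2 * b * p + (1 - p - e2) * b * p" by (simp only: distrib_right)
  also have "\<dots> = p * a * p + e2 * a * p + (1 - p - e2) * a * p" using E by simp
  also have "\<dots> = (p + e2 + (1 - p - e2)) * a * p" by (simp only: distrib_right)
  finally have bp: "b * p = a * p" by simp
  have "p * a = p * a * (p + e2 + (1 - p - e2))" by simp
  also have "\<dots> = p * a * p + p * a * e2 + p * a * (1 - p - e2)" by (simp only: distrib_left)
  also have "\<dots> = p * b * p + p * b * e2 + p * b * (1 - p - e2)" using E by simp
  also have "\<dots> = p * b * (p + e2 + (1 - p - e2))" by (simp only: distrib_left)
  finally have pa: "p * a = p * b" by simp
  have "b * x = b * p * x" using F(2) by (simp add: p_def mult.assoc)
  also have "\<dots> = a * x" using bp F(2) by (simp add: p_def mult.assoc)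
  finally have 1: "a * x = b * x" by simp
  have xp: "x * p = x" using F(3) by (simp add: p_def)
  have "x * a = (x * p) * a" using xp by simp
  also have "\<dots> = x * (p * a)" by (simp only: mult.assoc)
  also have "\<dots> = (x * p) * b" using pa by (simp only: mult.assoc)
  finally have 2: "x * a = x * b" using xp by simp
  show ?thesis using 1 2 by (simp add: gcEP_le_def x_def)
qed

lemma b_pow: fixes b p x :: "'a::complex_banach_star_algebra"
  assumes "b * x = p" "p * x = x" shows "b ^ k * p * x ^ k = p"
proof (induction k)
  case 0 then show ?case by simp
next
  case (Suc k)
  have "b ^ Suc k * p * x ^ Suc k = b ^ k * (b * (p * x)) * x ^ k"
    by (simp add: mult.assoc pow_comm_in)
  also have "\<dots> = b ^ k * p * x ^ k" using assms by simp
  finally show ?case using Suc by simp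
qed

lemma dir_fwd: fixes a b :: "'a::complex_banach_star_algebra"
  assumes A: "a \<in> gcEP_set" and B: "b \<in> gcEP_set" and L: "gcEP_le a b"
  shows "(\<exists>e1 e2 t1 s1 s2 n1 n2 n3 n4 t3 t4 t5.
       e1 = a * gcEP a \<and> e2 = adj e2 \<and> e2 = e2 ^ 2 \<and>
       e1 * e1 = e1 \<and> e1 * e2 = 0 \<and> e2 * e1 = 0 \<and>
       (let e3 = 1 - e1 - e2 in
         e1 * a * e1 = t1 \<and> e1 * a * e2 = s1 \<and> e1 * a * e3 = s2 \<and>
         e2 * a * e1 = 0 \<and> e2 * a * e2 = n1 \<and> e2 * a * e3 = n2 \<and>
         e3 * a * e1 = 0 \<and> e3 * a * e2 = n3 \<and> e3 * a * e3 = n4 \<and>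
         e1 * b * e1 = t1 \<and> e1 * b * e2 = s1 \<and> e1 * b * e3 = s2 \<and>
         e2 * b * e1 = 0 \<and> e2 * b * e2 = t3 \<and> e2 * b * e3 = t4 \<and>
         e3 * b * e1 = 0 \<and> e3 * b * e2 = 0 \<and> e3 * b * e3 = t5) \<and>
       corner_inv e1 t1 \<and> corner_inv e2 t3 \<and>
       n1 + n2 + n3 + n4 \<in> qnil \<and> t5 \<in> qnil)"
proof -
  define x where "x = gcEP a"
  define y where "y = gcEP b"
  have ga: "is_gcEP a x" using gcEP_is[OF A] by (simp add: x_def)
  have gb: "is_gcEP b y" using gcEP_is[OF B] by (simp add: y_def)
  define p where "p = a * x"
  define q where "q = b * y"
  note Fa = gc_facts[OF ga, folded p_def]
  note Fb = gc_facts[OF gb, folded q_def]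
  have pp: "p * p = p" and px: "p * x = x" and xp: "x * p = x" and adjp: "adj p = p"
    and ap: "a * p = p * a * p" and xap: "x * a * p = p"
    using Fa by (simp_all add: p_def mult.assoc)
  have qq: "q * q = q" and qy: "q * y = y" and yq: "y * q = y" and adjq: "adj q = q"
    and bq: "b * q = q * b * q" and ybq: "y * b * q = q"
    using Fb by (simp_all add: q_def mult.assoc)
  have bx: "b * x = p" and xb: "x * b = x * a" using L by (simp_all add: gcEP_le_def x_def p_def)
  have bp: "b * p = a * p"
  proof -
    have "b * p = b * (x * a * p)" using xap by simp
    also have "\<dots> = (b * x) * a * p" by (simp add: mult.assoc)
    finally show ?thesis using bx ap by simp
  qed
  have pb: "p * b = p * a" using xb by (simp add: p_def mult.assoc)
  have qp: "q * p = p"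
  proof -
    have "(1 - b * y) * p = 0"
    proof (rule absorb[OF gb])
      fix k
      have "p * (x * x ^ k) = x * x ^ k" by (simp add: mult.assoc[symmetric] px)
      thus "p = b ^ (k + 1) * x * x ^ k"
        using b_pow[OF bx px, of "k+1"] by (simp add: mult.assoc)
    qed
    thus ?thesis by (simp add: algebra_simps q_def)
  qed
  have pq: "p * q = p"
  proof -
    have "p * q = adj (q * p)" using adjp adjq by (simp add: adj_mult)
    thus ?thesis using qp adjp by simp
  qed
  define e where "e = q - p"
  have ee: "e * e = e" using pp qq pq qp by (simp add: e_def algebra_simps)
  have pe: "p * e = 0" using pp pq by (simp add: e_def algebra_simps)
  have ep: "e * p = 0" using pp qp by (simp add: e_def algebra_simps)
  have eq: "e * q = e" using qq pq by (simp add: e_def algebra_simps)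
  have qe: "q * e = e" using qq qp by (simp add: e_def algebra_simps)
  have adje: "e = adj e" using adjp adjq by (simp add: e_def adj_diff)
  have e2: "e = e ^ 2" using ee by (simp add: power2_eq_square)
  have e3: "1 - p - e = 1 - q" by (simp add: e_def)
  have qap: "q * a * p = a * p"
  proof -
    have "q * a * p = q * (p * a * p)" using ap by (simp add: mult.assoc)
    also have "\<dots> = (q * p) * a * p" by (simp add: mult.assoc)
    finally show ?thesis using qp ap by simp
  qed
  have G1: "e * a * p = 0"
  proof -
    have "e * a * p = q * a * p - p * a * p" by (simp add: e_def left_diff_distrib)
    thus ?thesis using qap ap by simp
  qed
  have G2: "(1 - q) * a * p = 0" using qap by (simp add: algebra_simps)
  have G3: "e * b * p = 0" using G1 bp by (simp add: mult.assoc)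
  have G4: "(1 - q) * b * p = 0" using G2 bp by (simp add: mult.assoc)
  have fbq: "(1 - q) * b * q = 0" using bq by (simp add: algebra_simps)
  have G5: "(1 - q) * b * e = 0"
  proof -
    have "(1 - q) * b * e = (1 - q) * b * q - (1 - q) * b * p" by (simp add: e_def algebra_simps)
    thus ?thesis using fbq G4 by simp
  qed
  have pbz: "p * b * z = p * a * z" for z using pb by simp
  have ci1: "corner_inv p (p * a * p)"
    unfolding corner_inv_def
  proof (intro conjI bexI)
    show "p * a * p \<in> {p * z * p |z. True}" by blast
    show "x \<in> {p * z * p |z. True}" using px xp by (metis (mono_tags, lifting) mem_Collect_eq mult.assoc)
    have "p * a * p * x = p * (a * x)" using px by (simp add: mult.assoc)
    thus "p * a * p * x = p" using pp by (simp add: p_def)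
    have "x * (p * a * p) = x * a * p" using xp by (metis mult.assoc)
    thus "x * (p * a * p) = p" using xap by simp
  qed
  have ebe: "e * b * e = e * b * q"
  proof -
    have "e * b * e = e * b * q - e * b * p" by (simp add: e_def algebra_simps)
    thus ?thesis using G3 by simp
  qed
  have pbpx: "p * b * p * x = p"
  proof -
    have "p * b * p * x = p * (a * (p * x))" using pbz by (simp add: mult.assoc)
    also have "\<dots> = p" using px pp by (simp add: p_def)
    finally show ?thesis .
  qed
  have bp2: "b * p = p * b * p" using bp ap pbz by simp
  have ypb: "y * p * b * p = p"
  proof -
    have "y * p * b * p = y * (b * p)" using bp2 by (simp add: mult.assoc)
    also have "\<dots> = y * b * q * p" using qp by (simp add: mult.assoc)
    also have "\<dots> = p" using ybq qp by simp
    finally show ?thesis .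
  qed
  have yp: "y * p = x"
  proof -
    have "y * p = y * (p * b * p * x)" using pbpx by simp
    also have "\<dots> = (y * p * b * p) * x" by (simp add: mult.assoc)
    finally show ?thesis using ypb px by simp
  qed
  have qx: "q * x = x"
  proof -
    have "q * x = q * p * x" using px by (simp add: mult.assoc)
    thus ?thesis using qp px by simp
  qed
  have eyp: "e * y * p = 0" using yp qx px by (simp add: e_def algebra_simps mult.assoc)
  have eye: "e * y * e = e * y"
  proof -
    have "e * y * e = e * y * q - e * y * p" by (simp add: e_def algebra_simps)
    thus ?thesis using eyp yq by (simp add: mult.assoc)
  qed
  have ci2: "corner_inv e (e * b * e)"
    unfolding corner_inv_def
  proof (intro conjI bexI)
    show "e * b * e \<in> {e * z * e |z. True}" by blast
    show "e * y * e \<in> {e * z * e |z. True}" by blast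
    have "e * b * e * (e * y * e) = (e * b * e) * y * e"
      by (metis ee mult.assoc)
    also have "\<dots> = e * b * q * y * e" using ebe by simp
    also have "\<dots> = e * (b * y) * e" using qy by (simp add: mult.assoc)
    also have "\<dots> = e" using eq ee by (simp add: q_def[symmetric])
    finally show "e * b * e * (e * y * e) = e" .
    have "e * y * e * (e * b * e) = (e * y * e) * b * e"
      by (metis ee mult.assoc)
    also have "\<dots> = e * y * b * e" using eye by simp
    also have "\<dots> = e * (y * b * q) * e" using qe by (simp add: mult.assoc)
    also have "\<dots> = e" using ybq eq ee by simp
    finally show "e * y * e * (e * b * e) = e" .
  qed
  have "(1 - a * x) * a * (1 - a * x) \<in> qnil" by (rule gc_qnil[OF ga])
  moreover have "1 - a * x = e + (1 - q)" by (simp add: e_def p_def)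
  moreover have "(e + (1 - q)) * a * (e + (1 - q)) = e * a * e + e * a * (1 - q) + (1 - q) * a * e + (1 - q) * a * (1 - q)"
    by (simp add: algebra_simps)
  ultimately have Q1: "e * a * e + e * a * (1 - q) + (1 - q) * a * e + (1 - q) * a * (1 - q) \<in> qnil"
    by simp
  have Q2: "(1 - q) * b * (1 - q) \<in> qnil" using gc_qnil[OF gb] by (simp add: q_def)
  have px': "a * gcEP a = p" by (simp add: p_def x_def)
  have adje': "adj e = e" using adje by simp
  have e2': "e ^ 2 = e" using e2 by simp
  show ?thesis
    apply (rule exI[where x=p], rule exI[where x=e], rule exI[where x="p*a*p"], rule exI[where x="p*a*e"],
      rule exI[where x="p*a*(1-q)"], rule exI[where x="e*a*e"], rule exI[where x="e*a*(1-q)"],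
      rule exI[where x="(1-q)*a*e"], rule exI[where x="(1-q)*a*(1-q)"], rule exI[where x="e*b*e"],
      rule exI[where x="e*b*(1-q)"], rule exI[where x="(1-q)*b*(1-q)"])
    unfolding Let_def e3
    using px' adje' e2' pp pe ep G1 G2 G3 G4 G5 pbz ci1 ci2 Q1 Q2 by simp
qed


theorem theorem4p4:
  fixes a b :: "'a :: complex_banach_star_algebra"
  assumes "a \<in> gcEP_set" and "b \<in> gcEP_set"
  shows "gcEP_le a b \<longleftrightarrow>
    (\<exists>e1 e2 t1 s1 s2 n1 n2 n3 n4 t3 t4 t5.
       e1 = a * gcEP a \<and> e2 = adj e2 \<and> e2 = e2 ^ 2 \<and>
       e1 * e1 = e1 \<and> e1 * e2 = 0 \<and> e2 * e1 = 0 \<and>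
       (let e3 = 1 - e1 - e2 in
         e1 * a * e1 = t1 \<and> e1 * a * e2 = s1 \<and> e1 * a * e3 = s2 \<and>
         e2 * a * e1 = 0 \<and> e2 * a * e2 = n1 \<and> e2 * a * e3 = n2 \<and>
         e3 * a * e1 = 0 \<and> e3 * a * e2 = n3 \<and> e3 * a * e3 = n4 \<and>
         e1 * b * e1 = t1 \<and> e1 * b * e2 = s1 \<and> e1 * b * e3 = s2 \<and>
         e2 * b * e1 = 0 \<and> e2 * b * e2 = t3 \<and> e2 * b * e3 = t4 \<and>
         e3 * b * e1 = 0 \<and> e3 * b * e2 = 0 \<and> e3 * b * e3 = t5) \<and>
       corner_inv e1 t1 \<and> corner_inv e2 t3 \<and>
       n1 + n2 + n3 + n4 \<in> qnil \<and> t5 \<in> qnil)"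
  (is "?L \<longleftrightarrow> ?R")
proof
  assume "?L" thus "?R" using dir_fwd[OF assms] by blast
next
  assume "?R" thus "?L" using dir_back[OF assms(1)] by blast
qed

end
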